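(* For any positive integer $n$, define \[ S(n;t,y;q) := 1 + \sum_{j \geq 1} \left( t\, \overline{{ n-1 \brack j-1 }}_{q,t} \frac{(-tyq;q)_{j-1}}{(yq;q)_{j-1}} y^j q^{j^2} + \overline{{ n \brack j }}_{q,t} \frac{(-tyq;q)_{j}}{(yq;q)_{j}} y^j q^{j^2} \right). \] Then \[ S(n;t,y;q)= \frac{(-tyq;q)_{n}}{(yq;q)_{n}}. \]
   Context: An overpartition is a partition in which the last occurrence of each distinct part size may be overlined; its weight $|\lambda|$ is the sum of its parts. For integers $0\le b\le a$, $\overline{{a \brack b}}_{q,t}=\sum_{\lambda} t^{\#_o(\lambda)} q^{|\lambda|}$, the sum over all overpartitions $\lambda$ with largest part at most $a-b$ and at most $b$ parts, $\#_o(\lambda)$ being the number of overlined parts; for other integer pairs $(a,b)$ (e.g. $b>a$) it is $0$, so the sum defining $S$ is finite. $(x;q)_k=\prod_{j=1}^k(1-xq^{j-1})$, $(x;q)_0=1$. *)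

theory Defs
  imports Main "HOL-Library.Multiset"
begin

text \<open>An overpartition is encoded as a pair (M, V): M is the multiset of parts
  (positive naturals), O is the set of part sizes whose last occurrence is overlined
  (so O is a subset of the distinct parts of M).\<close>

definition overpartitions_in_box :: "nat \<Rightarrow> nat \<Rightarrow> (nat multiset \<times> nat set) set" where
  "overpartitions_in_box L k =
     {(M, V). (\<forall>x\<in>#M. 0 < x \<and> x \<le> L) \<and> size M \<le> k \<and> V \<subseteq> set_mset M}"

definition over_qbinom :: "nat \<Rightarrow> nat \<Rightarrow> 'a::comm_ring_1 \<Rightarrow> 'a \<Rightarrow> 'a" where
  "over_qbinom a b q t =
     (if b \<le> a then
        (\<Sum>p\<in>overpartitions_in_box (a - b) b. t ^ card (snd p) * q ^ sum_mset (fst p))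
      else 0)"

definition qpoch :: "'a::comm_ring_1 \<Rightarrow> 'a \<Rightarrow> nat \<Rightarrow> 'a" where
  "qpoch x q k = (\<Prod>i<k. 1 - x * q ^ i)"

text \<open>S(n;t,y;q).  The sum over j \<ge> 1 is finite: for j > n both over_qbinom terms vanish,
  so summing over 1..n is the same sum.\<close>
definition S :: "nat \<Rightarrow> 'a::field \<Rightarrow> 'a \<Rightarrow> 'a \<Rightarrow> 'a" where
  "S n t y q = 1 + (\<Sum>j\<in>{1..n}.
      t * over_qbinom (n - 1) (j - 1) q t * qpoch (- t * y * q) q (j - 1) / qpoch (y * q) q (j - 1)
        * y ^ j * q ^ (j ^ 2)
      + over_qbinom n j q t * qpoch (- t * y * q) q j / qpoch (y * q) q j * y ^ j * q ^ (j ^ 2))"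

end

theory Submission
  imports Defs
begin

definition hmap :: "nat \<Rightarrow> bool \<Rightarrow> nat multiset \<times> nat set \<Rightarrow> nat multiset \<times> nat set" where
  "hmap k b p = (image_mset Suc (fst p) + replicate_mset (k - size (fst p)) 1,
                 (if b then insert 1 (Suc ` snd p) else Suc ` snd p))"

lemma box_mem: "(M, V) \<in> overpartitions_in_box L k \<longleftrightarrow>
   (\<forall>x\<in>#M. 0 < x \<and> x \<le> L) \<and> size M \<le> k \<and> V \<subseteq> set_mset M"
  by (simp add: overpartitions_in_box_def)

lemma box_0k: "overpartitions_in_box 0 k = {({#}, {})}"
proof -
  { fix M :: "nat multiset" and V assume "(M, V) \<in> overpartitions_in_box 0 k"
    then have h: "\<forall>x\<in>#M. 0 < x \<and> x \<le> 0" "V \<subseteq> set_mset M" by (simp_all add: box_mem)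
    then have "M = {#}" by (cases M rule: multiset_cases) auto
    then have "M = {#}" "V = {}" using h(2) by auto
  } note * = this
  show ?thesis
  proof (rule set_eqI)
    fix p :: "nat multiset \<times> nat set"
    obtain M V where "p = (M, V)" by fastforce
    then show "p \<in> overpartitions_in_box 0 k \<longleftrightarrow> p \<in> {({#}, {})}"
      using *[of M V] by (auto simp: box_mem)
  qed
qed

lemma box_L0: "overpartitions_in_box L 0 = {({#}, {})}"
proof -
  { fix M :: "nat multiset" and V assume "(M, V) \<in> overpartitions_in_box L 0"
    then have "M = {#}" "V = {}" by (auto simp: box_mem)
  }
  then show ?thesis by (auto simp: box_mem)
qed

lemma sum_mset_Suc: "sum_mset (image_mset Suc M) = sum_mset M + size M"
  by (induction M) auto

lemma hmap_in:
  assumes "(M, V) \<in> overpartitions_in_box L k'" "k' \<le> k" "b \<Longrightarrow> k' < k"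
  shows "hmap k b (M, V) \<in> overpartitions_in_box (Suc L) k"
    and "size (fst (hmap k b (M, V))) = k"
proof -
  have M: "\<forall>x\<in>#M. 0 < x \<and> x \<le> L" "size M \<le> k'" "V \<subseteq> set_mset M"
    using assms(1) by (auto simp: box_mem)
  show "size (fst (hmap k b (M, V))) = k" using M assms(2) by (simp add: hmap_def)
  have "1 \<in># replicate_mset (k - size M) 1" if b using M assms(2,3) that by simp
  then show "hmap k b (M, V) \<in> overpartitions_in_box (Suc L) k"
    using M assms(2) by (auto simp: hmap_def box_mem)
qed

lemma box_inv:
  assumes "(M, V) \<in> overpartitions_in_box (Suc L) (Suc k)" "size M = Suc k"
  shows "\<exists>p. (1 \<notin> V \<and> p \<in> overpartitions_in_box L (Suc k) \<and> (M, V) = hmap (Suc k) False p)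
           \<or> (1 \<in> V \<and> p \<in> overpartitions_in_box L k \<and> (M, V) = hmap (Suc k) True p)"
proof -
  have M: "\<forall>x\<in>#M. 0 < x \<and> x \<le> Suc L" "V \<subseteq> set_mset M"
    using assms(1) by (auto simp: box_mem)
  define M' where "M' = image_mset (\<lambda>x. x - 1) (filter_mset (\<lambda>x. 1 < x) M)"
  define V' where "V' = (\<lambda>x. x - 1) ` (V - {1})"
  have e1: "image_mset Suc M' = filter_mset (\<lambda>x. 1 < x) M"
  proof -
    have "image_mset Suc M' = image_mset (\<lambda>x. Suc (x - 1)) (filter_mset (\<lambda>x. 1 < x) M)"
      by (simp add: M'_def multiset.map_comp o_def)
    also have "\<dots> = image_mset id (filter_mset (\<lambda>x. 1 < x) M)"
      by (rule image_mset_cong) auto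
    finally show ?thesis by simp
  qed
  have e2: "filter_mset (\<lambda>x. \<not> 1 < x) M = replicate_mset (count M 1) 1"
  proof -
    have "filter_mset (\<lambda>x. \<not> 1 < x) M = filter_mset (\<lambda>x. x = 1) M"
      by (rule filter_mset_cong) (use M in auto)
    then show ?thesis by (simp add: filter_eq_replicate_mset)
  qed
  have eM: "M = image_mset Suc M' + replicate_mset (count M 1) 1"
    by (subst e1, subst e2[symmetric], rule multiset_partition)
  have sz: "size M' + count M 1 = Suc k"
    using arg_cong[OF eM, of size] assms(2) by simp
  have eV: "Suc ` V' = V - {1}"
  proof -
    have "Suc ` V' = (\<lambda>x. Suc (x - 1)) ` (V - {1})" by (simp add: V'_def image_image)
    also have "\<dots> = id ` (V - {1})"
      by (rule image_cong) (use M in auto)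
    finally show ?thesis by simp
  qed
  have M'box: "\<forall>x\<in>#M'. 0 < x \<and> x \<le> L" using M by (auto simp: M'_def)
  have V'sub: "V' \<subseteq> set_mset M'"
  proof
    fix v assume "v \<in> V'"
    then obtain x where x: "x \<in> V" "x \<noteq> 1" "v = x - 1" by (auto simp: V'_def)
    then have xM: "x \<in># M" using M by auto
    then have "0 < x" using M by auto
    then have "1 < x" using x(2) by linarith
    note xM this
    then show "v \<in> set_mset M'" using x(3) by (auto simp: M'_def)
  qed
  show ?thesis
  proof (cases "1 \<in> V")
    case True
    then have c1: "count M 1 \<ge> 1" using M by auto
    have "size M' \<le> k" using sz c1 by linarith
    moreover have "(M, V) = hmap (Suc k) True (M', V')"
    proof -
      have cc: "Suc k - size M' = count M 1" using sz by simp
      have a: "M = image_mset Suc M' + replicate_mset (Suc k - size M') 1"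
        by (subst cc) (rule eM)
      have b: "V = insert 1 (Suc ` V')" using eV True by auto
      show ?thesis unfolding hmap_def using a b by simp
    qed
    ultimately show ?thesis using True M'box V'sub by (auto simp: box_mem)
  next
    case False
    have "size M' \<le> Suc k" using sz by simp
    moreover have "(M, V) = hmap (Suc k) False (M', V')"
    proof -
      have cc: "Suc k - size M' = count M 1" using sz by simp
      have a: "M = image_mset Suc M' + replicate_mset (Suc k - size M') 1"
        by (subst cc) (rule eM)
      have b: "V = Suc ` V'" using eV False by auto
      show ?thesis unfolding hmap_def using a b by simp
    qed
    ultimately show ?thesis using False M'box V'sub by (auto simp: box_mem)
  qed
qed

lemma box_split:
  "overpartitions_in_box (Suc L) (Suc k) =
     overpartitions_in_box (Suc L) k \<union> hmap (Suc k) False ` overpartitions_in_box L (Suc k)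
       \<union> hmap (Suc k) True ` overpartitions_in_box L k"
proof (intro equalityI subsetI)
  fix p assume p: "p \<in> overpartitions_in_box (Suc L) (Suc k)"
  obtain M V where pMV: "p = (M, V)" by fastforce
  show "p \<in> overpartitions_in_box (Suc L) k \<union> hmap (Suc k) False ` overpartitions_in_box L (Suc k)
       \<union> hmap (Suc k) True ` overpartitions_in_box L k"
  proof (cases "size M = Suc k")
    case True
    then show ?thesis using box_inv[of M V L k] p pMV by blast
  next
    case False
    then show ?thesis using p pMV by (auto simp: box_mem)
  qed
next
  fix p assume "p \<in> overpartitions_in_box (Suc L) k \<union> hmap (Suc k) False ` overpartitions_in_box L (Suc k)
       \<union> hmap (Suc k) True ` overpartitions_in_box L k"
  then show "p \<in> overpartitions_in_box (Suc L) (Suc k)"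
  proof (elim UnE)
    assume "p \<in> overpartitions_in_box (Suc L) k" then show ?thesis
      by (cases p) (auto simp: box_mem)
  next
    assume "p \<in> hmap (Suc k) False ` overpartitions_in_box L (Suc k)"
    then show ?thesis using hmap_in(1) by fastforce
  next
    assume "p \<in> hmap (Suc k) True ` overpartitions_in_box L k"
    then show ?thesis using hmap_in(1)[of _ _ L k "Suc k" True] by fastforce
  qed
qed

lemma box_finite: "finite (overpartitions_in_box L k)"
proof (induction L arbitrary: k)
  case 0
  then show ?case by (simp add: box_0k)
next
  case (Suc L)
  note IHL = Suc.IH
  show ?case
  proof (induction k)
    case 0
    then show ?case by (simp add: box_L0)
  next
    case (Suc k)
    then show ?case using IHL by (simp add: box_split)
  qed
qed

lemma box_no0: "p \<in> overpartitions_in_box L k \<Longrightarrow> 0 \<notin> snd p"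
  by (cases p) (auto simp: box_mem)

lemma box_Vfin: "p \<in> overpartitions_in_box L k \<Longrightarrow> finite (snd p)"
  by (cases p) (auto simp: box_mem intro: finite_subset)

lemma recover_V:
  assumes "0 \<notin> V"
  shows "(\<lambda>x. x - 1) ` ((if b then insert 1 (Suc ` V) else Suc ` V) - {1}) = V"
proof -
  have "1 \<notin> Suc ` V" using assms by auto
  then have "(if b then insert 1 (Suc ` V) else Suc ` V) - {1} = Suc ` V" by auto
  then show ?thesis by (simp add: image_image)
qed

lemma recover_M:
  assumes "\<forall>x\<in>#M. 0 < x"
  shows "image_mset (\<lambda>x. x - 1) (filter_mset (\<lambda>x. 1 < x) (image_mset Suc M + replicate_mset r 1)) = M"
proof -
  have "filter_mset (\<lambda>x. 1 < x) (image_mset Suc M) = image_mset Suc M"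
    using assms by (induction M) auto
  moreover have "filter_mset (\<lambda>x. 1 < x) (replicate_mset r (1::nat)) = {#}"
    by (induction r) auto
  ultimately show ?thesis by (simp add: multiset.map_comp o_def)
qed

lemma hmap_inj: "inj_on (hmap k b) (overpartitions_in_box L k')"
proof (rule inj_onI)
  fix p1 p2 assume p1: "p1 \<in> overpartitions_in_box L k'" and p2: "p2 \<in> overpartitions_in_box L k'"
    and eq: "hmap k b p1 = hmap k b p2"
  obtain M1 V1 where e1: "p1 = (M1, V1)" by fastforce
  obtain M2 V2 where e2: "p2 = (M2, V2)" by fastforce
  have m1: "\<forall>x\<in>#M1. 0 < x" "0 \<notin> V1" using p1 e1 by (auto simp: box_mem)
  have m2: "\<forall>x\<in>#M2. 0 < x" "0 \<notin> V2" using p2 e2 by (auto simp: box_mem)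
  have "image_mset (\<lambda>x. x - 1) (filter_mset (\<lambda>x. 1 < x) (fst (hmap k b p1))) =
        image_mset (\<lambda>x. x - 1) (filter_mset (\<lambda>x. 1 < x) (fst (hmap k b p2)))" using eq by simp
  then have "M1 = M2" using recover_M[OF m1(1)] recover_M[OF m2(1)] e1 e2 by (simp add: hmap_def)
  moreover have "(\<lambda>x. x - 1) ` (snd (hmap k b (M1, V1)) - {1}) = (\<lambda>x. x - 1) ` (snd (hmap k b (M2, V2)) - {1})"
    using eq e1 e2 by simp
  then have "V1 = V2" using recover_V[OF m1(2), of b] recover_V[OF m2(2), of b]
    unfolding hmap_def snd_conv by metis
  ultimately show "p1 = p2" using e1 e2 by simp
qed

definition wt :: "'a::comm_ring_1 \<Rightarrow> 'a \<Rightarrow> nat multiset \<times> nat set \<Rightarrow> 'a" where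
  "wt q t p = t ^ card (snd p) * q ^ sum_mset (fst p)"

lemma hmap_wt:
  assumes "p \<in> overpartitions_in_box L k'" "k' \<le> k"
  shows "wt q t (hmap k b p) = (if b then t else 1) * q ^ k * wt q t p"
proof -
  obtain M V where e: "p = (M, V)" by fastforce
  have m: "size M \<le> k" "0 \<notin> V" "finite V" using assms e box_no0[OF assms(1)] box_Vfin[OF assms(1)]
    by (auto simp: box_mem)
  have s: "sum_mset (fst (hmap k b p)) = sum_mset M + k"
    using m(1) e by (simp add: hmap_def sum_mset_Suc)
  have c0: "card (Suc ` V) = card V" by (simp add: card_image)
  have "1 \<notin> Suc ` V" using m(2) by auto
  then have c1: "card (insert 1 (Suc ` V)) = Suc (card V)" using c0 m(3) by simp
  show ?thesis
    using s c0 c1 e by (simp add: wt_def hmap_def power_add mult_ac)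
qed

definition gb :: "nat \<Rightarrow> nat \<Rightarrow> 'a::comm_ring_1 \<Rightarrow> 'a \<Rightarrow> 'a" where
  "gb L k q t = (\<Sum>p\<in>overpartitions_in_box L k. wt q t p)"

lemma gb_0k: "gb 0 k q t = 1" by (simp add: gb_def box_0k wt_def)
lemma gb_L0: "gb L 0 q t = 1" by (simp add: gb_def box_L0 wt_def)

lemma gb_rec:
  "gb (Suc L) (Suc k) q t = gb (Suc L) k q t + q ^ Suc k * (gb L (Suc k) q t + t * gb L k q t)"
proof -
  let ?A = "overpartitions_in_box (Suc L) k"
  let ?B = "hmap (Suc k) False ` overpartitions_in_box L (Suc k)"
  let ?C = "hmap (Suc k) True ` overpartitions_in_box L k"
  have fA: "finite ?A" and fB: "finite ?B" and fC: "finite ?C" by (simp_all add: box_finite)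
  have dBC: "?B \<inter> ?C = {}"
  proof -
    have "1 \<notin> snd x" if xB: "x \<in> ?B" for x
    proof -
      obtain p where p: "p \<in> overpartitions_in_box L (Suc k)" "x = hmap (Suc k) False p"
        using xB by blast
      have "0 \<notin> snd p" by (rule box_no0[OF p(1)])
      then show ?thesis using p(2) by (auto simp: hmap_def)
    qed
    moreover have "1 \<in> snd x" if "x \<in> ?C" for x using that by (auto simp: hmap_def)
    ultimately show ?thesis by blast
  qed
  have dA: "?A \<inter> (?B \<union> ?C) = {}"
  proof -
    have a1: "size (fst x) \<le> k" if "x \<in> ?A" for x using that by (cases x) (auto simp: box_mem)
    have a2: "size (fst x) = Suc k" if xBC: "x \<in> ?B \<union> ?C" for x
      using xBC
    proof
      assume "x \<in> ?B"
      then obtain p where p: "p \<in> overpartitions_in_box L (Suc k)" "x = hmap (Suc k) False p" by blast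
      obtain M V where "p = (M, V)" by fastforce
      then show ?thesis using hmap_in(2)[of M V L "Suc k" "Suc k" False] p by auto
    next
      assume "x \<in> ?C"
      then obtain p where p: "p \<in> overpartitions_in_box L k" "x = hmap (Suc k) True p" by blast
      obtain M V where "p = (M, V)" by fastforce
      then show ?thesis using hmap_in(2)[of M V L k "Suc k" True] p by auto
    qed
    { fix x assume "x \<in> ?A" "x \<in> ?B \<union> ?C"
      then have False using a1[of x] a2[of x] by simp }
    then show ?thesis by blast
  qed
  have "gb (Suc L) (Suc k) q t = sum (wt q t) (?A \<union> (?B \<union> ?C))"
    unfolding gb_def box_split by (simp add: Un_assoc)
  also have "\<dots> = sum (wt q t) ?A + (sum (wt q t) ?B + sum (wt q t) ?C)"
    using fA fB fC dA dBC by (simp add: sum.union_disjoint)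
  finally have 1: "gb (Suc L) (Suc k) q t = sum (wt q t) ?A + (sum (wt q t) ?B + sum (wt q t) ?C)" .
  have "sum (wt q t) ?B = (\<Sum>p\<in>overpartitions_in_box L (Suc k). wt q t (hmap (Suc k) False p))"
    by (rule sum.reindex[OF hmap_inj, unfolded o_def])
  also have "\<dots> = (\<Sum>p\<in>overpartitions_in_box L (Suc k). q ^ Suc k * wt q t p)"
  proof (rule sum.cong[OF refl])
    fix p assume "p \<in> overpartitions_in_box L (Suc k)"
    from hmap_wt[OF this, of "Suc k" q t False] show "wt q t (hmap (Suc k) False p) = q ^ Suc k * wt q t p"
      by simp
  qed
  also have "\<dots> = q ^ Suc k * gb L (Suc k) q t" unfolding gb_def by (rule sum_distrib_left[symmetric])
  finally have 2: "sum (wt q t) ?B = q ^ Suc k * gb L (Suc k) q t" .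
  have "sum (wt q t) ?C = (\<Sum>p\<in>overpartitions_in_box L k. wt q t (hmap (Suc k) True p))"
    by (rule sum.reindex[OF hmap_inj, unfolded o_def])
  also have "\<dots> = (\<Sum>p\<in>overpartitions_in_box L k. (t * q ^ Suc k) * wt q t p)"
  proof (rule sum.cong[OF refl])
    fix p assume "p \<in> overpartitions_in_box L k"
    from hmap_wt[OF this, of "Suc k" q t True] show "wt q t (hmap (Suc k) True p) = (t * q ^ Suc k) * wt q t p"
      by simp
  qed
  also have "\<dots> = (t * q ^ Suc k) * gb L k q t" unfolding gb_def by (rule sum_distrib_left[symmetric])
  finally have 3: "sum (wt q t) ?C = (t * q ^ Suc k) * gb L k q t" .
  have 4: "sum (wt q t) ?A = gb (Suc L) k q t" by (simp add: gb_def)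
  show ?thesis unfolding 1 2 3 4 by (simp add: distrib_left mult_ac)
qed

definition aa :: "'a::field \<Rightarrow> 'a \<Rightarrow> 'a \<Rightarrow> nat \<Rightarrow> 'a" where
  "aa t y q k = qpoch (- t * y * q) q k / qpoch (y * q) q k"

lemma qpoch_Suc: "qpoch x q (Suc k) = qpoch x q k * (1 - x * q ^ k)"
  by (simp add: qpoch_def)

lemma qpoch_nz: "qpoch (x::'a::field) q n \<noteq> 0 \<Longrightarrow> k \<le> n \<Longrightarrow> qpoch x q k \<noteq> 0"
  by (auto simp: qpoch_def prod_zero_iff)

lemma aa_step:
  assumes "qpoch (y * q) q (Suc k) \<noteq> 0"
  shows "aa t y q (Suc k) = aa t y q k + y * q ^ Suc k * (aa t y q (Suc k) + t * aa t y q k)"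
proof -
  define D where "D = qpoch (y * q) q k"
  define N where "N = qpoch (- t * y * q) q k"
  define d where "d = 1 - y * q * q ^ k"
  define e where "e = 1 - (- t * y * q) * q ^ k"
  have Dd: "D \<noteq> 0" "d \<noteq> 0" using assms by (auto simp: qpoch_Suc D_def d_def)
  have a1: "aa t y q (Suc k) = N * e / (D * d)" by (simp add: aa_def qpoch_Suc D_def N_def d_def e_def)
  have a0: "aa t y q k = N / D" by (simp add: aa_def D_def N_def)
  have key2: "e = d + y * q ^ Suc k * (e + t * d)" by (simp add: d_def e_def algebra_simps)
  define A where "A = N / D"
  define Y where "Y = y * q ^ Suc k"
  have "aa t y q (Suc k) = A * e / d" unfolding a1 A_def by simp
  also from key2 have "A * e / d = A * (d + Y * (e + t * d)) / d" unfolding Y_def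
    by (rule arg_cong[where f="\<lambda>z. A * z / d"])
  also have "A * (d + Y * (e + t * d)) / d = A + Y * (A * e / d + t * A)"
    using Dd(2) by (simp add: field_simps)
  finally show ?thesis unfolding a0 A_def[symmetric] Y_def using \<open>aa t y q (Suc k) = A * e / d\<close>
    by simp
qed

definition AA :: "nat \<Rightarrow> 'a::field \<Rightarrow> 'a \<Rightarrow> 'a \<Rightarrow> nat \<Rightarrow> nat \<Rightarrow> 'a" where
  "AA n t y q m j = (if j = 0 then aa t y q m else if j + m \<le> n then
     y ^ j * q ^ (j * (j + m)) * (gb (n - j - m) j q t * aa t y q (j + m)
        + t * gb (n - j - m) (j - 1) q t * aa t y q (j + m - 1)) else 0)"

definition XX :: "nat \<Rightarrow> 'a::field \<Rightarrow> 'a \<Rightarrow> 'a \<Rightarrow> nat \<Rightarrow> nat \<Rightarrow> 'a" where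
  "XX n t y q m j = (if j + m \<le> n then y ^ j * q ^ (j * (j + m)) *
     (if j = 0 then 1 else gb (n - j - m) j q t - gb (n - j - m) (j - 1) q t) * aa t y q (j + m) else 0)"

definition YY :: "nat \<Rightarrow> 'a::field \<Rightarrow> 'a \<Rightarrow> 'a \<Rightarrow> nat \<Rightarrow> nat \<Rightarrow> 'a" where
  "YY n t y q m j = (if 1 \<le> j \<and> j + m \<le> n then y ^ j * q ^ (j * (j + m)) *
     gb (n - j - m) (j - 1) q t * (aa t y q (j + m) + t * aa t y q (j + m - 1)) else 0)"

lemma AXY: "m \<le> n \<Longrightarrow> AA n t y q m j = XX n t y q m j + YY n t y q m j"
  by (simp add: AA_def XX_def YY_def algebra_simps)

lemma A_shift:
  assumes "Suc m \<le> n" "qpoch (y * q) q n \<noteq> 0"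
  shows "AA n t y q (Suc m) j = XX n t y q m j + YY n t y q m (Suc j)"
proof (cases j)
  case 0
  have st: "aa t y q (Suc m) = aa t y q m + y * q ^ Suc m * (aa t y q (Suc m) + t * aa t y q m)"
    by (rule aa_step[OF qpoch_nz[OF assms(2) assms(1)]])
  show ?thesis using 0 assms(1) st by (simp add: AA_def XX_def YY_def gb_L0)
next
  case (Suc i)
  show ?thesis
  proof (cases "Suc i + Suc m \<le> n")
    case True
    define L' where "L' = n - Suc i - Suc m"
    have nL: "n - Suc i - m = Suc L'" "n - Suc (Suc i) - m = L'"
      "n - Suc (i + m) = Suc L'" "n - Suc (Suc (i + m)) = L'" using True by (simp_all add: L'_def)
    have rec: "gb (Suc L') (Suc i) q t - gb (Suc L') i q t = q ^ Suc i * (gb L' (Suc i) q t + t * gb L' i q t)"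
      using gb_rec[of L' i q t] by simp
    define P where "P = aa t y q (Suc (Suc (i + m)))"
    define Q where "Q = aa t y q (Suc (i + m))"
    have st: "P = Q + y * q ^ Suc (Suc (i + m)) * (P + t * Q)"
      unfolding P_def Q_def by (rule aa_step[OF qpoch_nz[OF assms(2)]]) (use True in simp)
    define c where "c = y ^ Suc i * q ^ (Suc i * (Suc i + m))"
    have ex1: "q ^ (Suc i * (Suc i + Suc m)) = q ^ (Suc i * (Suc i + m)) * q ^ Suc i"
      by (simp add: power_add[symmetric] algebra_simps)
    have ex2: "q ^ (Suc (Suc i) * (Suc (Suc i) + m)) = q ^ (Suc i * (Suc i + m)) * q ^ Suc i * q ^ Suc (Suc (i + m))"
      by (simp add: power_add[symmetric] algebra_simps)
    have lhs: "AA n t y q (Suc m) j = c * q ^ Suc i * (gb L' (Suc i) q t * P + t * gb L' i q t * Q)"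
      using True Suc by (simp add: AA_def nL c_def power_add P_def Q_def mult_ac)
    have x: "XX n t y q m j = c * (q ^ Suc i * (gb L' (Suc i) q t + t * gb L' i q t)) * Q"
      using True Suc by (simp add: XX_def nL c_def Q_def rec)
    have yy: "YY n t y q m (Suc j) = y * c * q ^ Suc i * q ^ Suc (Suc (i + m)) * gb L' (Suc i) q t * (P + t * Q)"
      using True Suc by (simp add: YY_def nL c_def P_def Q_def power_add mult_ac)
    have diff: "c * q ^ Suc i * (gb L' (Suc i) q t * P + t * gb L' i q t * Q)
       - (c * (q ^ Suc i * (gb L' (Suc i) q t + t * gb L' i q t)) * Q
          + y * c * q ^ Suc i * q ^ Suc (Suc (i + m)) * gb L' (Suc i) q t * (P + t * Q))
       = c * q ^ Suc i * gb L' (Suc i) q t * (P - (Q + y * q ^ Suc (Suc (i + m)) * (P + t * Q)))"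
      by (simp add: algebra_simps)
    have "P - (Q + y * q ^ Suc (Suc (i + m)) * (P + t * Q)) = 0" using st by simp
    then show ?thesis unfolding lhs x yy using diff by simp
  next
    case False
    then show ?thesis using Suc by (auto simp: AA_def XX_def YY_def gb_0k)
  qed
qed

definition WW :: "nat \<Rightarrow> 'a::field \<Rightarrow> 'a \<Rightarrow> 'a \<Rightarrow> nat \<Rightarrow> 'a" where
  "WW n t y q m = (\<Sum>j<Suc n. AA n t y q m j)"

lemma W_step:
  assumes "Suc m \<le> n" "qpoch (y * q) q n \<noteq> 0"
  shows "WW n t y q (Suc m) = WW n t y q m"
proof -
  have "WW n t y q (Suc m) = (\<Sum>j<Suc n. XX n t y q m j) + (\<Sum>j<Suc n. YY n t y q m (Suc j))"
    unfolding WW_def using A_shift[OF assms] by (simp add: sum.distrib)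
  also have "(\<Sum>j<Suc n. YY n t y q m (Suc j)) = (\<Sum>j<Suc n. YY n t y q m j)"
  proof -
    have "(\<Sum>j<Suc (Suc n). YY n t y q m j) = YY n t y q m 0 + (\<Sum>j<Suc n. YY n t y q m (Suc j))"
      by (rule sum.lessThan_Suc_shift)
    moreover have "(\<Sum>j<Suc (Suc n). YY n t y q m j) = (\<Sum>j<Suc n. YY n t y q m j) + YY n t y q m (Suc n)"
      by simp
    moreover have "YY n t y q m 0 = 0" "YY n t y q m (Suc n) = 0" by (simp_all add: YY_def)
    ultimately show ?thesis by simp
  qed
  also have "(\<Sum>j<Suc n. XX n t y q m j) + (\<Sum>j<Suc n. YY n t y q m j) = WW n t y q m"
    unfolding WW_def using AXY[of m n t y q] assms(1) by (simp add: sum.distrib)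
  finally show ?thesis .
qed

lemma W_all:
  assumes "qpoch (y * q) q n \<noteq> 0"
  shows "m \<le> n \<Longrightarrow> WW n t y q m = WW n t y q 0"
proof (induction m)
  case 0 then show ?case by simp
next
  case (Suc m)
  then show ?case using W_step[OF Suc.prems assms] by simp
qed

lemma W_n: "WW n t y q n = aa t y q n"
  unfolding WW_def by (simp add: sum.lessThan_Suc_shift AA_def del: sum.lessThan_Suc)

lemma over_gb: "b \<le> a \<Longrightarrow> over_qbinom a b q t = gb (a - b) b q t"
  by (simp add: over_qbinom_def gb_def wt_def)

lemma S_term:
  assumes "j < n"
  shows "t * over_qbinom (n - 1) (Suc j - 1) q t * qpoch (- t * y * q) q (Suc j - 1) / qpoch (y * q) q (Suc j - 1)
        * y ^ Suc j * q ^ (Suc j ^ 2)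
      + over_qbinom n (Suc j) q t * qpoch (- t * y * q) q (Suc j) / qpoch (y * q) q (Suc j) * y ^ Suc j * q ^ (Suc j ^ 2)
      = AA n t y q (0::nat) (Suc j)"
proof -
  have o1: "over_qbinom (n - 1) (Suc j - 1) q t = gb (n - Suc j) j q t"
    using assms by (simp add: over_gb)
  have o2: "over_qbinom n (Suc j) q t = gb (n - Suc j) (Suc j) q t"
    using assms by (simp add: over_gb)
  show ?thesis unfolding o1 o2 using assms
    by (simp add: AA_def aa_def power2_eq_square divide_inverse algebra_simps)
qed

theorem theorem3p4:
  fixes n :: nat and t y q :: "'a::field"
  assumes "1 \<le> n"
    and "qpoch (y * q) q n \<noteq> 0"
  shows "S n t y q = qpoch (- t * y * q) q n / qpoch (y * q) q n"
proof -
  have "S n t y q = 1 + (\<Sum>j<n.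
      t * over_qbinom (n - 1) (Suc j - 1) q t * qpoch (- t * y * q) q (Suc j - 1) / qpoch (y * q) q (Suc j - 1)
        * y ^ Suc j * q ^ (Suc j ^ 2)
      + over_qbinom n (Suc j) q t * qpoch (- t * y * q) q (Suc j) / qpoch (y * q) q (Suc j) * y ^ Suc j * q ^ (Suc j ^ 2))"
    unfolding S_def by (subst sum_bounds_lt_plus1[symmetric]) (rule refl)
  also have "\<dots> = 1 + (\<Sum>j<n. AA n t y q 0 (Suc j))"
    by (rule arg_cong[where f="\<lambda>x. 1 + x"], rule sum.cong[OF refl], rule S_term, simp)
  also have "\<dots> = WW n t y q 0"
    unfolding WW_def by (simp add: sum.lessThan_Suc_shift AA_def aa_def qpoch_def del: sum.lessThan_Suc)
  also have "\<dots> = WW n t y q n" using W_all[OF assms(2), of n] by simp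
  also have "\<dots> = aa t y q n" by (rule W_n)
  finally show ?thesis by (simp add: aa_def)
qed

end
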